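(* The image of $\bar\rho_{A^\vee, \ell}\colon \mathrm{Gal}(\overline{\mathbb{Q}}/\mathbb{Q}) \to \mathrm{GL}_4(\mathbb{F}_{\ell})$ is given by the subgroup \[\left\{ \begin{pmatrix} d & 0 & 0 & 0 \\ -b_1 & a & 0 & 0 \\ z_1-z_2 & -w_1 & d & -w_2 \\ b_2 & 0 & 0 & a \end{pmatrix} \in \mathrm{M}_4(\mathbb{F}_\ell) : a, d \in \mathbb{F}_\ell^{\times},\ b_i,w_i,x_i\in \mathbb{F}_\ell \right\}\leqslant \mathrm{GL}_4(\mathbb{F}_\ell),\] where $z_1-z_2 = a^{-1}(b_1w_1-b_2w_2-dx_1+dx_2) \in \mathbb{F}_\ell$.
   Context: Let $\ell\leqslant 7$ be prime. Let $E_1,E_2$ be elliptic curves over $\mathbb{Q}$ with cyclic subgroups $C_1\leqslant E_1[\ell]$, $C_2\leqslant E_2[\ell]$ of order $\ell$, stable under $\mathrm{Gal}(\overline{\mathbb{Q}}/\mathbb{Q})$, with an isomorphism $c\colon C_1\xrightarrow{\sim} C_2$ of Galois modules. Let $A := (E_1\times E_2)/G$ where $G := \{(P,c(P)) : P\in C_1\}$, with quotient map $q$; $A$ is an abelian surface over $\mathbb{Q}$ and $A^\vee$ denotes its dual. Choose a basis $P_1,P_2,Q_1,Q_2$ of $T_\ell(E_1\times E_2)$ with $\{P_1,P_2\}$ a symplectic basis of $T_\ell E_1$, $\{Q_1,Q_2\}$ a symplectic basis of $T_\ell E_2$, $P_1 \bmod \ell$ generating $C_1$ and $Q_1\bmod\ell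 = c(P_1\bmod \ell)$ generating $C_2$. Assume the image of the $\ell$-adic representation $\rho_{E_1\times E_2,\ell}$ in this basis is the full group of block-diagonal matrices $\mathrm{diag}(A_1,A_2)$ with $A_i=\begin{pmatrix} a+x_i\ell & b_i+y_i\ell\\ w_i\ell & d+z_i\ell\end{pmatrix}$, where $a,d\in\{1,\dots,\ell-1\}$, $b_i\in\{0,\dots,\ell-1\}$, $w_i,x_i,y_i,z_i\in\mathbb{Z}_\ell$, subject to $\det A_1=\det A_2$ (infinitely many such pairs exist). Use the basis of $T_\ell A$ given by the columns of the change of basis matrix $\begin{pmatrix} 1 & 0 & 1/\ell & 0 \\ 0 & 1 & 0 & 0 \\ 0 & 0 & 1/\ell & 0 \\ 0 & 0 & 0 & 1\end{pmatrix}$ inside $V_\ell(E_1\times E_2)$; in this basis the image of $\bar\rho_{A,\ell}$ consists of the matrices $\begin{pmatrix} a & b_1 & x_1-x_2 & -b_2 \\ 0 & d & w_1 & 0 \\ 0 & 0 & a & 0 \\ 0 & 0 & w_2 & d \end{pmatrix}$ with $a,d\in\mathbb{F}_\ell^\times$, $b_i,w_i,x_i\in\mathbb{F}_\ell$. Take the basis of $A^\vee[\ell]$ dual to that of $A[\ell]$ under the Weil pairing, so that $\bar\rho_{A^\vee,\ell}\cong\bar\rho_{A,\ell}^{*}\otimes\varepsilon_\ell$ (contragredient twisted by the mod $\ell$ cyclotomic character, which acts by multiplication by $ad$). *)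

theory Defs
  imports "HOL-Analysis.Analysis"
begin

text \<open>4x4 matrices over a field are of type 'a^4^4; rows are given by vector.
  The image of the mod-ell representation of A in the chosen basis.\<close>
definition rhoA_image :: "(('a::field)^4^4) set" where
  "rhoA_image = {vector [vector [a, b1, x1 - x2, - b2],
                         vector [0, d, w1, 0],
                         vector [0, 0, a, 0],
                         vector [0, 0, w2, d]] | a d b1 b2 w1 w2 x1 x2.
                  a \<noteq> 0 \<and> d \<noteq> 0}"

definition rhoAdual_image :: "(('a::field)^4^4) set" where
  "rhoAdual_image = {vector [vector [d, 0, 0, 0],
                             vector [- b1, a, 0, 0],
                             vector [inverse a * (b1 * w1 - b2 * w2 - d * x1 + d * x2), - w1, d, - w2],
                             vector [b2, 0, 0, a]] | a d b1 b2 w1 w2 x1 x2.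
                      a \<noteq> 0 \<and> d \<noteq> 0}"

definition dual_twist :: "('g \<Rightarrow> ('a::field)^4^4) \<Rightarrow> ('g \<Rightarrow> 'a) \<Rightarrow> 'g \<Rightarrow> 'a^4^4" where
  "dual_twist rho eps g = (\<chi> i j. eps g * (transpose (matrix_inv (rho g))) $ i $ j)"

end

theory Submission
  imports Defs
begin

lemma vector_4 [simp]:
 "(vector [x,y,z,w] ::('a::zero)^4)$1 = x"
 "(vector [x,y,z,w] ::('a::zero)^4)$2 = y"
 "(vector [x,y,z,w] ::('a::zero)^4)$3 = z"
 "(vector [x,y,z,w] ::('a::zero)^4)$4 = w"
  unfolding vector_def by simp_all

definition MA :: "'a::field \<Rightarrow> 'a \<Rightarrow> 'a \<Rightarrow> 'a \<Rightarrow> 'a \<Rightarrow> 'a \<Rightarrow> 'a \<Rightarrow> 'a \<Rightarrow> 'a^4^4" where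
  "MA a d b1 b2 w1 w2 x1 x2 = vector [vector [a, b1, x1 - x2, - b2],
                         vector [0, d, w1, 0],
                         vector [0, 0, a, 0],
                         vector [0, 0, w2, d]]"

definition NA :: "'a::field \<Rightarrow> 'a \<Rightarrow> 'a \<Rightarrow> 'a \<Rightarrow> 'a \<Rightarrow> 'a \<Rightarrow> 'a \<Rightarrow> 'a \<Rightarrow> 'a^4^4" where
  "NA a d b1 b2 w1 w2 x1 x2 = vector [vector [1/a, - b1/(a*d), (b1*w1 - b2*w2 - d*(x1-x2))/(a*a*d), b2/(a*d)],
                         vector [0, 1/d, - w1/(a*d), 0],
                         vector [0, 0, 1/a, 0],
                         vector [0, 0, - w2/(a*d), 1/d]]"

definition DA :: "'a::field \<Rightarrow> 'a \<Rightarrow> 'a \<Rightarrow> 'a \<Rightarrow> 'a \<Rightarrow> 'a \<Rightarrow> 'a \<Rightarrow> 'a \<Rightarrow> 'a^4^4" where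
  "DA a d b1 b2 w1 w2 x1 x2 = vector [vector [d, 0, 0, 0],
                             vector [- b1, a, 0, 0],
                             vector [inverse a * (b1 * w1 - b2 * w2 - d * x1 + d * x2), - w1, d, - w2],
                             vector [b2, 0, 0, a]]"

lemma MN: assumes "a \<noteq> 0" "d \<noteq> 0"
  shows "MA a d b1 b2 w1 w2 x1 x2 ** NA a d b1 b2 w1 w2 x1 x2 = mat 1"
    "NA a d b1 b2 w1 w2 x1 x2 ** MA a d b1 b2 w1 w2 x1 x2 = mat 1"
  using assms
  by (simp_all add: vec_eq_iff forall_4 matrix_matrix_mult_def sum_4 mat_def MA_def NA_def field_simps)

lemma inv_unique:
  fixes A :: "'a::field^'n^'n"
  assumes "A ** N = mat 1" "N ** A = mat 1"
  shows "matrix_inv A = N"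
proof -
  have ex: "\<exists>A'. A ** A' = mat 1 \<and> A' ** A = mat 1" using assms by blast
  define B where "B = matrix_inv A"
  have B: "A ** B = mat 1 \<and> B ** A = mat 1"
    unfolding B_def matrix_inv_def by (rule someI_ex[OF ex])
  have "B = B ** (A ** N)" using assms by simp
  also have "\<dots> = (B ** A) ** N" by (simp add: matrix_mul_assoc)
  also have "\<dots> = N" using B by simp
  finally show ?thesis unfolding B_def by simp
qed

lemma dual_MA: assumes "a \<noteq> 0" "d \<noteq> 0"
  shows "(\<chi> i j. (a*d) * (transpose (matrix_inv (MA a d b1 b2 w1 w2 x1 x2))) $ i $ j)
     = DA a d b1 b2 w1 w2 x1 x2"
proof -
  have "matrix_inv (MA a d b1 b2 w1 w2 x1 x2) = NA a d b1 b2 w1 w2 x1 x2"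
    using inv_unique[OF MN[OF assms]] .
  then show ?thesis using assms
    by (simp add: vec_eq_iff forall_4 transpose_def NA_def DA_def field_simps)
qed

lemma MA_11: "MA a d b1 b2 w1 w2 x1 x2 $ 1 $ 1 = a" and MA_22: "MA a d b1 b2 w1 w2 x1 x2 $ 2 $ 2 = d"
  by (simp_all add: MA_def)

theorem proposition3p10:
  fixes rho :: "'g \<Rightarrow> ('a::{field,finite})^4^4"
    and rhoD :: "'g \<Rightarrow> 'a^4^4"
    and eps :: "'g \<Rightarrow> 'a"
    and ell :: nat
  assumes "prime ell" and "ell \<le> 7" and "CARD('a) = ell"
    and "range rho = rhoA_image"
    and "\<forall>g. eps g = rho g $ 1 $ 1 * rho g $ 2 $ 2"
    and "\<forall>g. rhoD g = dual_twist rho eps g"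
  shows "range rhoD = rhoAdual_image"
proof -
  have A: "(rhoA_image :: ('a^4^4) set) = {MA a d b1 b2 w1 w2 x1 x2 | a d b1 b2 w1 w2 x1 x2. a \<noteq> 0 \<and> d \<noteq> 0}"
    unfolding rhoA_image_def MA_def by simp
  have D: "(rhoAdual_image :: ('a^4^4) set) = {DA a d b1 b2 w1 w2 x1 x2 | a d b1 b2 w1 w2 x1 x2. a \<noteq> 0 \<and> d \<noteq> 0}"
    unfolding rhoAdual_image_def DA_def by simp
  have key: "rhoD g = DA a d b1 b2 w1 w2 x1 x2"
    if "rho g = MA a d b1 b2 w1 w2 x1 x2" "a \<noteq> 0" "d \<noteq> 0" for g a d b1 b2 w1 w2 x1 x2
  proof -
    have "eps g = a * d" using assms(5) that(1) by (simp add: MA_11 MA_22)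
    then show ?thesis using assms(6) that dual_MA[OF that(2,3)] unfolding dual_twist_def by simp
  qed
  show ?thesis
  proof
    show "range rhoD \<subseteq> rhoAdual_image"
    proof
      fix y assume "y \<in> range rhoD"
      then obtain g where g: "y = rhoD g" by blast
      have "rho g \<in> rhoA_image" using assms(4) by blast
      then obtain a d b1 b2 w1 w2 x1 x2 where "rho g = MA a d b1 b2 w1 w2 x1 x2" "a \<noteq> 0" "d \<noteq> 0"
        unfolding A by blast
      then show "y \<in> rhoAdual_image" unfolding D g using key by blast
    qed
  next
    show "rhoAdual_image \<subseteq> range rhoD"
    proof
      fix y :: "'a^4^4" assume "y \<in> rhoAdual_image"
      then obtain a d b1 b2 w1 w2 x1 x2 where y: "y = DA a d b1 b2 w1 w2 x1 x2" "a \<noteq> 0" "d \<noteq> 0"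
        unfolding D by blast
      have "MA a d b1 b2 w1 w2 x1 x2 \<in> range rho" unfolding assms(4) A using y by blast
      then obtain g where "rho g = MA a d b1 b2 w1 w2 x1 x2" by auto
      then have "rhoD g = y" using key y by blast
      then show "y \<in> range rhoD" by blast
    qed
  qed
qed

end
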